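(* Let $C=[c_{j_1,j_2}]\in\mathbb{R}^{n_1\times n_2}$, $\mathbf d_1\in\mathbb{R}^{n_1}_{++}$, $\mathbf d_2\in\mathbb{R}^{n_2}_{++}$ with $\mathbf 1_{n_1}^\top\mathbf d_1=\mathbf 1_{n_2}^\top\mathbf d_2$. Then there exists a unique $(\mathbf x,\mathbf y)\in\mathbb{R}^{n_1}\times\mathbb{R}^{n_2}$ with $c_{j_1,j_2}-x_{j_1}-y_{j_2}>0$ for all $j_1,j_2$ and $\mathbf 1_{n_1}^\top\mathbf x=\mathbf 1_{n_2}^\top\mathbf y$, such that the matrix $[(c_{j_1,j_2}-x_{j_1}-y_{j_2})^{-1}]$ has row sums vector $\mathbf d_1$ and column sums vector $\mathbf d_2$.
   Context: $\mathbf 1_n$ is the all-ones vector and $\mathbb{R}^n_{++}$ the set of entrywise positive vectors. *)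

theory Defs
  imports "HOL-Analysis.Analysis"
begin

end

theory Submission
  imports Defs
begin

lemma uniq_aux:
  fixes C :: "real ^ 'n2 ^ 'n1" and x x' :: "real ^ 'n1" and y y' :: "real ^ 'n2"
  assumes pos: "\<forall>i j. C $ i $ j - x $ i - y $ j > 0" "\<forall>i j. C $ i $ j - x' $ i - y' $ j > 0"
    and sx: "(\<Sum>i\<in>UNIV. x $ i) = (\<Sum>j\<in>UNIV. y $ j)" "(\<Sum>i\<in>UNIV. x' $ i) = (\<Sum>j\<in>UNIV. y' $ j)"
    and r: "\<forall>i. (\<Sum>j\<in>UNIV. inverse (C $ i $ j - x $ i - y $ j)) = (\<Sum>j\<in>UNIV. inverse (C $ i $ j - x' $ i - y' $ j))"
    and c: "\<forall>j. (\<Sum>i\<in>UNIV. inverse (C $ i $ j - x $ i - y $ j)) = (\<Sum>i\<in>UNIV. inverse (C $ i $ j - x' $ i - y' $ j))"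
  shows "x = x' \<and> y = y'"
proof -
  define M where "M i j = C$i$j - x$i - y$j" for i j
  define M' where "M' i j = C$i$j - x'$i - y'$j" for i j
  define a where "a i = x'$i - x$i" for i
  define b where "b j = y'$j - y$j" for j
  define T where "T i j = (a i + b j) / (M i j * M' i j)" for i j
  have Mpos: "M i j > 0" "M' i j > 0" for i j using pos by (auto simp: M_def M'_def)
  have T_eq: "T i j = inverse (M' i j) - inverse (M i j)" for i j
  proof -
    have "M i j - M' i j = a i + b j" by (simp add: M_def M'_def a_def b_def)
    thus ?thesis using Mpos[of i j] unfolding T_def by (simp add: field_simps)
  qed
  have rowT: "(\<Sum>j\<in>UNIV. T i j) = 0" for i
    using r by (simp add: T_eq sum_subtractf M_def M'_def)
  have colT: "(\<Sum>i\<in>UNIV. T i j) = 0" for j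
    using c by (simp add: T_eq sum_subtractf M_def M'_def)
  have "(\<Sum>i\<in>UNIV. \<Sum>j\<in>UNIV. (a i + b j) * T i j)
      = (\<Sum>i\<in>UNIV. a i * (\<Sum>j\<in>UNIV. T i j)) + (\<Sum>i\<in>UNIV. \<Sum>j\<in>UNIV. b j * T i j)"
    by (simp add: distrib_right sum.distrib sum_distrib_left)
  also have "(\<Sum>i\<in>UNIV. \<Sum>j\<in>UNIV. b j * T i j) = (\<Sum>j\<in>UNIV. b j * (\<Sum>i\<in>UNIV. T i j))"
    by (subst sum.swap) (simp add: sum_distrib_left)
  finally have S0: "(\<Sum>i\<in>UNIV. \<Sum>j\<in>UNIV. (a i + b j) * T i j) = 0"
    by (simp add: rowT colT)
  have tnn: "(a i + b j) * T i j \<ge> 0" for i j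
  proof -
    have "(a i + b j) * T i j = (a i + b j)^2 / (M i j * M' i j)"
      by (simp add: T_def power2_eq_square)
    thus ?thesis using Mpos[of i j] by simp
  qed
  have inn: "(\<Sum>j\<in>UNIV. (a i + b j) * T i j) \<ge> 0" for i by (intro sum_nonneg tnn)
  have "\<forall>i\<in>UNIV. (\<Sum>j\<in>UNIV. (a i + b j) * T i j) = 0"
    using S0 sum_nonneg_eq_0_iff[of UNIV "\<lambda>i. \<Sum>j\<in>UNIV. (a i + b j) * T i j"] inn by simp
  hence "\<forall>i j. (a i + b j) * T i j = 0"
  proof (intro allI)
    fix i j
    assume h: "\<forall>i\<in>UNIV. (\<Sum>j\<in>UNIV. (a i + b j) * T i j) = 0"
    have "\<forall>j\<in>UNIV. (a i + b j) * T i j = 0"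
      using h sum_nonneg_eq_0_iff[of UNIV "\<lambda>j. (a i + b j) * T i j"] tnn by simp
    thus "(a i + b j) * T i j = 0" by simp
  qed
  hence ab0: "a i + b j = 0" for i j
  proof -
    assume h: "\<forall>i j. (a i + b j) * T i j = 0"
    have "(a i + b j)^2 / (M i j * M' i j) = 0"
      using h by (simp add: T_def power2_eq_square)
    thus ?thesis using Mpos[of i j] by simp
  qed
  obtain i0 :: 'n1 where True by simp
  obtain j0 :: 'n2 where True by simp
  define t where "t = a i0"
  have at: "a i = t" for i using ab0[of i j0] ab0[of i0 j0] by (simp add: t_def)
  have bt: "b j = - t" for j using ab0[of i0 j] by (simp add: t_def)
  have "(\<Sum>i\<in>UNIV. x' $ i) = (\<Sum>i\<in>UNIV. x $ i + t)"
  proof (rule sum.cong)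
    fix i :: 'n1
    have "a i = t" by (rule at)
    thus "x' $ i = x $ i + t" unfolding a_def by simp
  qed simp
  hence e1: "(\<Sum>i\<in>UNIV. x' $ i) = (\<Sum>i\<in>UNIV. x $ i) + real CARD('n1) * t"
    by (simp add: sum.distrib)
  have "(\<Sum>j\<in>UNIV. y' $ j) = (\<Sum>j\<in>UNIV. y $ j - t)"
  proof (rule sum.cong)
    fix j :: 'n2
    have "b j = - t" by (rule bt)
    thus "y' $ j = y $ j - t" unfolding b_def by simp
  qed simp
  hence e2: "(\<Sum>j\<in>UNIV. y' $ j) = (\<Sum>j\<in>UNIV. y $ j) - real CARD('n2) * t"
    by (simp add: sum_subtractf)
  have "(real CARD('n1) + real CARD('n2)) * t = 0" using e1 e2 sx by (simp add: algebra_simps)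
  moreover have "real CARD('n1) + real CARD('n2) > 0" by (simp add: add_pos_pos)
  ultimately have "t = 0" by simp
  hence "\<forall>i. a i = 0" "\<forall>j. b j = 0" using at bt by auto
  thus ?thesis by (auto simp: a_def b_def vec_eq_iff)
qed

lemma ite_div_aux: "((if P then 1 else 0) / (a::real)) = (if P then 1 / a else 0)" by simp
lemma ite_mult_aux: "((if P then 1 else 0) * (a::real)) = (if P then a else 0)" by simp

lemma h_bounds:
  fixes w m :: real
  assumes w: "w > 0" and m: "m > 0"
  shows "w * m - ln m \<ge> 1 + ln w"
    and "w * m - ln m \<ge> w * m / 2 + 1 + ln (w / 2)"
    and "w * m - ln m \<ge> - ln m"
proof -
  have "ln (w * m) \<le> w * m - 1" using w m by (intro ln_le_minus_one) simp
  thus "w * m - ln m \<ge> 1 + ln w" using ln_mult[of w m] w m by simp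
  have "ln (w / 2 * m) \<le> w / 2 * m - 1" using w m by (intro ln_le_minus_one) simp
  moreover have "ln (w / 2 * m) = ln (w / 2) + ln m" using ln_mult[of "w/2" m] w m by (simp add: mult.commute)
  ultimately show "w * m - ln m \<ge> w * m / 2 + 1 + ln (w / 2)" by simp
  show "w * m - ln m \<ge> - ln m" using w m by simp
qed

lemma h_box:
  fixes w m K :: real
  assumes w: "w > 0" and m: "m > 0" and hK: "w * m - ln m \<le> K"
  shows "exp (- K) \<le> m" and "m \<le> 2 * (K - 1 - ln (w / 2)) / w"
proof -
  have "- ln m \<le> K" using h_bounds(3)[OF w m] hK by linarith
  hence "ln (exp (-K)) \<le> ln m" by simp
  thus "exp (- K) \<le> m" using m by (subst (asm) ln_le_cancel_iff) auto
  have "w * m / 2 \<le> K - 1 - ln (w / 2)" using h_bounds(2)[OF w m] hK by linarith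
  thus "m \<le> 2 * (K - 1 - ln (w / 2)) / w" using w by (simp add: field_simps)
qed

lemma exist_aux:
  fixes C :: "real ^ 'n2 ^ 'n1" and d1 :: "real ^ 'n1" and d2 :: "real ^ 'n2"
  assumes d1pos: "\<forall>i. d1 $ i > 0" and d2pos: "\<forall>j. d2 $ j > 0"
    and dsum: "(\<Sum>i\<in>UNIV. d1 $ i) = (\<Sum>j\<in>UNIV. d2 $ j)"
  shows "\<exists>x y. (\<forall>i j. C $ i $ j - x $ i - y $ j > 0)
          \<and> (\<forall>i. (\<Sum>j\<in>UNIV. inverse (C $ i $ j - x $ i - y $ j)) = d1 $ i)
          \<and> (\<forall>j. (\<Sum>i\<in>UNIV. inverse (C $ i $ j - x $ i - y $ j)) = d2 $ j)"
proof -
  define S where "S = (\<Sum>i\<in>UNIV. d1 $ i)"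
  have Spos: "S > 0" unfolding S_def using d1pos by (intro sum_pos) auto
  define w where "w i j = d1 $ i * d2 $ j / S" for i j
  have wpos: "w i j > 0" for i j using d1pos d2pos Spos by (simp add: w_def)
  have wrow: "(\<Sum>j\<in>UNIV. w i j) = d1 $ i" for i
  proof -
    have "(\<Sum>j\<in>UNIV. w i j) = d1 $ i * (\<Sum>j\<in>UNIV. d2 $ j) / S"
      by (simp add: w_def sum_divide_distrib[symmetric] sum_distrib_left)
    thus ?thesis using Spos dsum S_def by simp
  qed
  have wcol: "(\<Sum>i\<in>UNIV. w i j) = d2 $ j" for j
  proof -
    have "(\<Sum>i\<in>UNIV. w i j) = (\<Sum>i\<in>UNIV. d1 $ i) * d2 $ j / S"
      by (simp add: w_def sum_divide_distrib[symmetric] sum_distrib_right)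
    thus ?thesis using Spos S_def by simp
  qed
  define Mf where "Mf p i j = C$i$j - fst p $ i - snd p $ j"
    for p :: "(real ^ 'n1) \<times> (real ^ 'n2)" and i j
  define h where "h i j m = w i j * m - ln m" for i j and m :: real
  define G where "G p = (\<Sum>i\<in>UNIV. \<Sum>j\<in>UNIV. h i j (Mf p i j))" for p
  define D where "D = {p. \<forall>i j. Mf p i j > 0}"
  define lb where "lb i j = 1 + ln (w i j)" for i j
  define L where "L = (\<Sum>i\<in>UNIV. \<Sum>j\<in>UNIV. lb i j)"
  obtain j0 :: 'n2 where True by simp
  obtain i0 :: 'n1 where True by simp
  define x0 :: "real ^ 'n1" where "x0 = (\<chi> i. Min (range (\<lambda>j. C$i$j)) - 1)"
  define p0 where "p0 = (x0, 0 :: real ^ 'n2)"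
  have Mp0: "Mf p0 i j \<ge> 1" for i j
  proof -
    have a: "Min (range (\<lambda>j. C$i$j)) \<le> C$i$j" by (rule Min_le) auto
    have b: "Mf p0 i j = C$i$j - x0$i" by (simp add: Mf_def p0_def)
    have c: "x0$i = Min (range (\<lambda>j. C$i$j)) - 1" unfolding x0_def by (rule vec_lambda_beta)
    show ?thesis using a b c by linarith
  qed
  define F0 where "F0 = G p0"
  define K where "K i j = F0 - L + lb i j" for i j
  define lo where "lo i j = exp (- K i j)" for i j
  define hi where "hi i j = 2 * (K i j - 1 - ln (w i j / 2)) / w i j" for i j
  have hlb: "h i j m \<ge> lb i j" if "m > 0" for i j m
    using h_bounds(1)[OF wpos that] by (simp add: h_def lb_def)
  have bnds: "lo i j \<le> Mf p i j \<and> Mf p i j \<le> hi i j" if pD: "p \<in> D" and pG: "G p \<le> F0" for p i j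
  proof -
    have Mpos: "Mf p k l > 0" for k l using pD by (simp add: D_def)
    have nn: "0 \<le> h k l (Mf p k l) - lb k l" for k l using hlb[OF Mpos[of k l]] by simp
    have "h i j (Mf p i j) - lb i j \<le> (\<Sum>l\<in>UNIV. h i l (Mf p i l) - lb i l)"
      by (rule member_le_sum) (use nn in auto)
    also have "\<dots> \<le> (\<Sum>k\<in>UNIV. \<Sum>l\<in>UNIV. h k l (Mf p k l) - lb k l)"
      by (rule member_le_sum[where f = "\<lambda>k. \<Sum>l\<in>UNIV. h k l (Mf p k l) - lb k l"])
         (use nn in \<open>auto intro: sum_nonneg\<close>)
    also have "\<dots> = G p - L" by (simp add: G_def L_def sum_subtractf)
    finally have "h i j (Mf p i j) \<le> K i j" using pG by (simp add: K_def)
    hence "w i j * Mf p i j - ln (Mf p i j) \<le> K i j" by (simp add: h_def)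
    from h_box[OF wpos Mpos this] show ?thesis by (simp add: lo_def hi_def)
  qed
  define Box where "Box = {p. snd p $ j0 = 0 \<and> (\<forall>i j. lo i j \<le> Mf p i j \<and> Mf p i j \<le> hi i j)}"
  have p0D: "p0 \<in> D" using Mp0 by (auto simp: D_def intro: less_le_trans[OF zero_less_one])
  have p0Box: "p0 \<in> Box" using bnds[OF p0D] by (simp add: Box_def F0_def p0_def)
  have loPos: "lo i j > 0" for i j by (simp add: lo_def)
  have BoxD: "Box \<subseteq> D" using loPos by (force simp: Box_def D_def intro: less_le_trans)
  have closed_Box: "closed Box"
    unfolding Box_def Mf_def
    by (intro closed_Collect_conj closed_Collect_all closed_Collect_le closed_Collect_eq continuous_intros)
  define Bx where "Bx i = \<bar>C$i$j0\<bar> + hi i j0" for i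
  define By where "By j = \<bar>C$i0$j\<bar> + Bx i0 + hi i0 j" for j
  have bx: "\<bar>fst p $ i\<bar> \<le> Bx i" if "p \<in> Box" for p i
  proof -
    have "lo i j0 \<le> Mf p i j0" "Mf p i j0 \<le> hi i j0" "snd p $ j0 = 0" using that by (auto simp: Box_def)
    thus ?thesis using loPos[of i j0] by (simp add: Mf_def Bx_def abs_if split: if_splits)
  qed
  have by_: "\<bar>snd p $ j\<bar> \<le> By j" if "p \<in> Box" for p j
  proof -
    have "lo i0 j \<le> Mf p i0 j" "Mf p i0 j \<le> hi i0 j" using that by (auto simp: Box_def)
    moreover have "\<bar>fst p $ i0\<bar> \<le> Bx i0" using bx[OF that] .
    ultimately show ?thesis using loPos[of i0 j] by (simp add: Mf_def By_def abs_if split: if_splits)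
  qed
  have bA: "bounded {x :: real ^ 'n1. \<forall>i. \<bar>x $ i\<bar> \<le> Bx i}"
    unfolding bounded_iff
  proof (intro exI ballI)
    fix x :: "real ^ 'n1" assume "x \<in> {x. \<forall>i. \<bar>x $ i\<bar> \<le> Bx i}"
    hence "(\<Sum>i\<in>UNIV. \<bar>x $ i\<bar>) \<le> (\<Sum>i\<in>UNIV. Bx i)" by (intro sum_mono) auto
    thus "norm x \<le> (\<Sum>i\<in>UNIV. Bx i)" using norm_le_l1_cart[of x] by linarith
  qed
  have bB: "bounded {y :: real ^ 'n2. \<forall>j. \<bar>y $ j\<bar> \<le> By j}"
    unfolding bounded_iff
  proof (intro exI ballI)
    fix y :: "real ^ 'n2" assume "y \<in> {y. \<forall>j. \<bar>y $ j\<bar> \<le> By j}"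
    hence "(\<Sum>j\<in>UNIV. \<bar>y $ j\<bar>) \<le> (\<Sum>j\<in>UNIV. By j)" by (intro sum_mono) auto
    thus "norm y \<le> (\<Sum>j\<in>UNIV. By j)" using norm_le_l1_cart[of y] by linarith
  qed
  have "Box \<subseteq> {x :: real ^ 'n1. \<forall>i. \<bar>x $ i\<bar> \<le> Bx i} \<times> {y :: real ^ 'n2. \<forall>j. \<bar>y $ j\<bar> \<le> By j}"
    using bx by_ by (auto simp: mem_Times_iff)
  hence bounded_Box: "bounded Box" using bounded_Times[OF bA bB] bounded_subset by blast
  have compact_Box: "compact Box" using closed_Box bounded_Box compact_eq_bounded_closed by blast
  have contG: "continuous_on Box G"
  proof -
    have cM: "continuous_on Box (\<lambda>p. Mf p i j)" for i j unfolding Mf_def by (intro continuous_intros)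
    have pM: "\<forall>p\<in>Box. Mf p i j \<noteq> 0" for i j
    proof
      fix p assume "p \<in> Box"
      hence "p \<in> D" using BoxD by blast
      thus "Mf p i j \<noteq> 0" unfolding D_def by (metis mem_Collect_eq less_irrefl)
    qed
    show ?thesis unfolding G_def h_def
      by (intro continuous_on_sum continuous_on_diff continuous_on_mult continuous_on_const continuous_on_ln cM pM)
  qed
  obtain q where qB: "q \<in> Box" and qmin: "\<forall>p\<in>Box. G q \<le> G p"
    using continuous_attains_inf[OF compact_Box _ contG] p0Box by blast
  have qD: "q \<in> D" using qB BoxD by blast
  have glob: "G q \<le> G p" if "p \<in> D" for p
  proof -
    define s where "s = snd p $ j0"
    define p' where "p' = (fst p + (\<chi> i. s), snd p - (\<chi> j. s))"
    have Meq: "Mf p' i j = Mf p i j" for i j by (simp add: Mf_def p'_def)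
    have Geq: "G p' = G p" by (simp add: G_def Meq)
    have p'D: "p' \<in> D" using that by (simp add: D_def Meq)
    show ?thesis
    proof (cases "G p \<le> F0")
      case True
      hence "p' \<in> Box" using bnds[OF p'D] Geq by (simp add: Box_def p'_def s_def)
      thus ?thesis using qmin Geq by auto
    next
      case False
      have "G q \<le> G p0" using qmin p0Box by blast
      thus ?thesis using False F0_def by simp
    qed
  qed
  define Mq where "Mq i j = Mf q i j" for i j
  have Mqpos: "Mq i j > 0" for i j using qD by (simp add: D_def Mq_def)
  define \<delta> where "\<delta> = Min (range (\<lambda>(i, j). Mq i j))"
  have \<delta>pos: "\<delta> > 0" unfolding \<delta>_def using Mqpos by (subst Min_gr_iff) auto
  have \<delta>le: "\<delta> \<le> Mq i j" for i j unfolding \<delta>_def by (rule Min_le) auto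
  have row: "(\<Sum>j\<in>UNIV. inverse (Mq i j)) = d1 $ i" for i
  proof -
    define \<phi> where "\<phi> t = (\<Sum>k\<in>UNIV. \<Sum>j\<in>UNIV. h k j (Mq k j - (if k = i then 1 else 0) * t))" for t
    have "(\<phi> has_real_derivative
        (\<Sum>k\<in>UNIV. \<Sum>j\<in>UNIV. (if k = i then inverse (Mq k j) - w k j else 0))) (at 0)"
      unfolding \<phi>_def h_def
      by (intro derivative_eq_intros refl) (auto simp: Mqpos inverse_eq_divide)
    moreover have "\<forall>t. \<bar>0 - t\<bar> < \<delta> \<longrightarrow> \<phi> 0 \<le> \<phi> t"
    proof (intro allI impI)
      fix t :: real assume t: "\<bar>0 - t\<bar> < \<delta>"
      define p where "p = (fst q + (\<chi> k. (if k = i then 1 else 0) * t), snd q)"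
      have Mp: "Mf p k j = Mq k j - (if k = i then 1 else 0) * t" for k j
        by (simp add: Mf_def p_def Mq_def)
      have "p \<in> D" unfolding D_def
      proof (intro CollectI allI)
        fix k j show "Mf p k j > 0" using \<delta>le[of k j] t by (auto simp: Mp)
      qed
      hence "G q \<le> G p" by (rule glob)
      moreover have "G p = \<phi> t" by (simp add: G_def \<phi>_def Mp)
      moreover have "G q = \<phi> 0" by (simp add: G_def \<phi>_def Mq_def)
      ultimately show "\<phi> 0 \<le> \<phi> t" by simp
    qed
    ultimately have "(\<Sum>k\<in>UNIV. \<Sum>j\<in>UNIV. (if k = i then inverse (Mq k j) - w k j else 0)) = 0"
      using DERIV_local_min \<delta>pos by blast
    moreover have "(\<Sum>k\<in>UNIV. \<Sum>j\<in>UNIV. if k = i then inverse (Mq k j) - w k j else 0)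
       = (\<Sum>k\<in>UNIV. if k = i then (\<Sum>j\<in>UNIV. inverse (Mq k j) - w k j) else 0)"
      by (rule sum.cong) auto
    ultimately have "(\<Sum>j\<in>UNIV. inverse (Mq i j) - w i j) = 0"
      by simp
    thus ?thesis using wrow[of i] by (simp add: sum_subtractf)
  qed
  have col: "(\<Sum>i\<in>UNIV. inverse (Mq i j)) = d2 $ j" for j
  proof -
    define \<phi> where "\<phi> t = (\<Sum>k\<in>UNIV. \<Sum>l\<in>UNIV. h k l (Mq k l - (if l = j then 1 else 0) * t))" for t
    have "(\<phi> has_real_derivative
        (\<Sum>k\<in>UNIV. \<Sum>l\<in>UNIV. (if l = j then inverse (Mq k l) - w k l else 0))) (at 0)"
      unfolding \<phi>_def h_def
      by (intro derivative_eq_intros refl) (auto simp: Mqpos inverse_eq_divide sum_subtractf ite_div_aux ite_mult_aux)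
    moreover have "\<forall>t. \<bar>0 - t\<bar> < \<delta> \<longrightarrow> \<phi> 0 \<le> \<phi> t"
    proof (intro allI impI)
      fix t :: real assume t: "\<bar>0 - t\<bar> < \<delta>"
      define p where "p = (fst q, snd q + (\<chi> l. (if l = j then 1 else 0) * t))"
      have Mp: "Mf p k l = Mq k l - (if l = j then 1 else 0) * t" for k l
        by (simp add: Mf_def p_def Mq_def)
      have "p \<in> D" unfolding D_def
      proof (intro CollectI allI)
        fix k l show "Mf p k l > 0" using \<delta>le[of k l] t by (auto simp: Mp)
      qed
      hence "G q \<le> G p" by (rule glob)
      moreover have "G p = \<phi> t" by (simp add: G_def \<phi>_def Mp)
      moreover have "G q = \<phi> 0" by (simp add: G_def \<phi>_def Mq_def)
      ultimately show "\<phi> 0 \<le> \<phi> t" by simp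
    qed
    ultimately have "(\<Sum>k\<in>UNIV. \<Sum>l\<in>UNIV. (if l = j then inverse (Mq k l) - w k l else 0)) = 0"
      using DERIV_local_min \<delta>pos by blast
    hence "(\<Sum>k\<in>UNIV. inverse (Mq k j) - w k j) = 0"
      by simp
    thus ?thesis using wcol[of j] by (simp add: sum_subtractf)
  qed
  show ?thesis
    by (rule exI[of _ "fst q"], rule exI[of _ "snd q"])
       (use Mqpos row col in \<open>simp add: Mq_def Mf_def\<close>)
qed


theorem corollary2p8:
  fixes C :: "real ^ 'n2 ^ 'n1" and d1 :: "real ^ 'n1" and d2 :: "real ^ 'n2"
  assumes "\<forall>i. d1 $ i > 0" and "\<forall>j. d2 $ j > 0"
    and "(\<Sum>i\<in>UNIV. d1 $ i) = (\<Sum>j\<in>UNIV. d2 $ j)"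
  shows "\<exists>!(x, y). (\<forall>i j. C $ i $ j - x $ i - y $ j > 0)
          \<and> (\<Sum>i\<in>UNIV. x $ i) = (\<Sum>j\<in>UNIV. y $ j)
          \<and> (\<forall>i. (\<Sum>j\<in>UNIV. inverse (C $ i $ j - x $ i - y $ j)) = d1 $ i)
          \<and> (\<forall>j. (\<Sum>i\<in>UNIV. inverse (C $ i $ j - x $ i - y $ j)) = d2 $ j)"
proof -
  obtain x0 :: "real ^ 'n1" and y0 :: "real ^ 'n2" where
    e: "\<forall>i j. C $ i $ j - x0 $ i - y0 $ j > 0"
       "\<forall>i. (\<Sum>j\<in>UNIV. inverse (C $ i $ j - x0 $ i - y0 $ j)) = d1 $ i"
       "\<forall>j. (\<Sum>i\<in>UNIV. inverse (C $ i $ j - x0 $ i - y0 $ j)) = d2 $ j"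
    using exist_aux[OF assms] by blast
  define s where "s = ((\<Sum>j\<in>UNIV. y0 $ j) - (\<Sum>i\<in>UNIV. x0 $ i)) / (real CARD('n1) + real CARD('n2))"
  define x1 :: "real ^ 'n1" where "x1 = x0 + (\<chi> i. s)"
  define y1 :: "real ^ 'n2" where "y1 = y0 - (\<chi> j. s)"
  have Meq: "C $ i $ j - x1 $ i - y1 $ j = C $ i $ j - x0 $ i - y0 $ j" for i j
    by (simp add: x1_def y1_def)
  have pos: "real CARD('n1) + real CARD('n2) > 0" by (simp add: add_pos_pos)
  have sx1: "(\<Sum>i\<in>UNIV. x1 $ i) = (\<Sum>i\<in>UNIV. x0 $ i) + real CARD('n1) * s"
    by (simp add: x1_def sum.distrib)
  have sy1: "(\<Sum>j\<in>UNIV. y1 $ j) = (\<Sum>j\<in>UNIV. y0 $ j) - real CARD('n2) * s"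
    by (simp add: y1_def sum_subtractf)
  have "(real CARD('n1) + real CARD('n2)) * s = (\<Sum>j\<in>UNIV. y0 $ j) - (\<Sum>i\<in>UNIV. x0 $ i)"
    using pos by (simp add: s_def)
  hence bal: "(\<Sum>i\<in>UNIV. x1 $ i) = (\<Sum>j\<in>UNIV. y1 $ j)"
    using sx1 sy1 by (simp add: algebra_simps)
  have P1: "(\<forall>i j. C $ i $ j - x1 $ i - y1 $ j > 0)
          \<and> (\<Sum>i\<in>UNIV. x1 $ i) = (\<Sum>j\<in>UNIV. y1 $ j)
          \<and> (\<forall>i. (\<Sum>j\<in>UNIV. inverse (C $ i $ j - x1 $ i - y1 $ j)) = d1 $ i)
          \<and> (\<forall>j. (\<Sum>i\<in>UNIV. inverse (C $ i $ j - x1 $ i - y1 $ j)) = d2 $ j)"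
    using e bal by (simp only: Meq) simp
  show ?thesis
  proof (rule ex1I[of _ "(x1, y1)"])
    show "case (x1, y1) of (x, y) \<Rightarrow> (\<forall>i j. C $ i $ j - x $ i - y $ j > 0)
          \<and> (\<Sum>i\<in>UNIV. x $ i) = (\<Sum>j\<in>UNIV. y $ j)
          \<and> (\<forall>i. (\<Sum>j\<in>UNIV. inverse (C $ i $ j - x $ i - y $ j)) = d1 $ i)
          \<and> (\<forall>j. (\<Sum>i\<in>UNIV. inverse (C $ i $ j - x $ i - y $ j)) = d2 $ j)"
      using P1 by simp
  next
    fix p :: "(real ^ 'n1) \<times> (real ^ 'n2)"
    assume h: "case p of (x, y) \<Rightarrow> (\<forall>i j. C $ i $ j - x $ i - y $ j > 0)
          \<and> (\<Sum>i\<in>UNIV. x $ i) = (\<Sum>j\<in>UNIV. y $ j)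
          \<and> (\<forall>i. (\<Sum>j\<in>UNIV. inverse (C $ i $ j - x $ i - y $ j)) = d1 $ i)
          \<and> (\<forall>j. (\<Sum>i\<in>UNIV. inverse (C $ i $ j - x $ i - y $ j)) = d2 $ j)"
    obtain a b where p: "p = (a, b)" by (cases p)
    have "x1 = a \<and> y1 = b"
      using h P1 unfolding p by (intro uniq_aux[of C x1 y1 a b]) simp_all
    thus "p = (x1, y1)" using p by simp
  qed
qed

end
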